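(* Let $\Gamma$ be a 3-colex, $c\neq c'$ colors, $E$ a $Z$-type error on the color code on $\Gamma$, and $S$ a $Z$-stabilizer of the 3D toric code on $\Gamma^{*\setminus cc'}$. Then there is a $Z$-stabilizer $\overline S$ of the color code such that $$\delta E+\sum_{e:\,S_e\neq I}e=\delta(E\overline S),$$ where sums of edges are mod 2.
   Context: Colors are $\{r,b,g,y\}$. A 3-colex $\Gamma$ is a 3-dimensional cell complex without boundary in which every vertex is 4-valent and lies in exactly four 3-cells, and whose 3-cells are properly 4-colored: every face lies in exactly two 3-cells, which have different colors. The dual complex $\Gamma^*$ has an $i$-cell for every $(3-i)$-cell of $\Gamma$, with incidences reversed; every 3-cell of $\Gamma^*$ is a tetrahedron. A vertex of $\Gamma^*$ is given the color of the corresponding 3-cell of $\Gamma$, so the four vertices of each tetrahedron have distinct colors. An edge with endpoint colors $x,y$ is an $xy$-edge. The 3D color code on $\Gamma$ has one qubit per tetrahedron $\nu$ of $\Gamma^*$, $X$-stabilizer generators $\prod_{\nu\ni v}X_\nu$ for vertices $v$, and $Z$-stabilizer generators $B^Z_e=\prod_{\nu\supset e}Z_\nu$ for edges $e$; $Z$-stabilizers are products of the $B^Z_e$. For distinct colors $x,y$ with remaining colors $u,w$, $\pi_{xy}(\nu)$ is the unique $uw$-edge of tetrahedron $\nu$. The minor complex $\Gamma^{*\setminus cc'}$ (with $d,d'$ the remaining colors) has as vertices the $d$- and $d'$-vertices, as edges the $dd'$-edges of $\Gamma^*$, one face $f_e$ for each $cc'$-edge $e$ of $\Gamma^*$ whose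 boundary is the set of $dd'$-edges of the tetrahedra containing $e$, and one 3-cell for each vertex of color $c$ or $c'$. The 3D toric code on $\Gamma^{*\setminus cc'}$ has qubits on edges and $Z$-stabilizer generators $\prod_{t\in\partial f}Z_t$ for faces $f$; its $Z$-stabilizers are products of these. $S_e$ denotes the tensor factor of $S$ on edge $e$. The edge boundary of $E=\prod_{\nu\in\Omega}Z_\nu$ is $\delta E=\sum_{\nu\in\Omega}\sum_{\{x,y\}}\pi_{xy}(\nu)$, the sum over the six unordered pairs of distinct colors (i.e. over the six edges of $\nu$), mod 2. *)

theory Defs
  imports Main
begin

datatype color = Rc | Bc | Gc | Yc

text \<open>Pauli Z-operators (up to phase) are represented by their supports;
  multiplication is symmetric difference (addition mod 2).\<close>
definition sdiff :: "'a set \<Rightarrow> 'a set \<Rightarrow> 'a set" where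
  "sdiff A B = (A - B) \<union> (B - A)"

text \<open>The dual complex \<Gamma>* of a 3-colex, given by its coloured vertices and its set
  T of tetrahedra (each a 4-element vertex set with four distinct colours).
  Absence of boundary: every triangle of a tetrahedron (dual to an edge of \<Gamma>,
  which has exactly two endpoints) lies in exactly two tetrahedra.\<close>
definition colex_dual :: "('v \<Rightarrow> color) \<Rightarrow> 'v set set \<Rightarrow> bool" where
  "colex_dual col T \<longleftrightarrow> finite T \<and>
     (\<forall>t\<in>T. finite t \<and> card t = 4 \<and> inj_on col t) \<and>
     (\<forall>t\<in>T. \<forall>s. s \<subseteq> t \<and> card s = 3 \<longrightarrow> card {t'\<in>T. s \<subseteq> t'} = 2)"

definition edges :: "'v set set \<Rightarrow> 'v set set" where
  "edges T = {e. card e = 2 \<and> (\<exists>t\<in>T. e \<subseteq> t)}"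

definition colored_edges :: "('v \<Rightarrow> color) \<Rightarrow> 'v set set \<Rightarrow> color set \<Rightarrow> 'v set set" where
  "colored_edges col T C = {e \<in> edges T. col ` e = C}"

definition BZ :: "'v set set \<Rightarrow> 'v set \<Rightarrow> 'v set set" where
  "BZ T e = {t \<in> T. e \<subseteq> t}"

inductive_set color_Zstab :: "'v set set \<Rightarrow> 'v set set set" for T where
  cz_id: "{} \<in> color_Zstab T"
| cz_mult: "A \<in> color_Zstab T \<Longrightarrow> e \<in> edges T \<Longrightarrow> sdiff A (BZ T e) \<in> color_Zstab T"

text \<open>Edge boundary of a Z-error with support \<Omega>: the edges lying in an odd number
  of tetrahedra of \<Omega> (sum of the six edges of each tetrahedron, mod 2).\<close>
definition edge_boundary :: "'v set set \<Rightarrow> 'v set set" where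
  "edge_boundary \<Omega> = {e. card e = 2 \<and> odd (card {t \<in> \<Omega>. e \<subseteq> t})}"

text \<open>Boundary of the face f_e of the minor complex \<Gamma>*\<setminus>cc' for a cc'-edge e:
  the dd'-edges of the tetrahedra containing e.\<close>
definition face_bdry :: "('v \<Rightarrow> color) \<Rightarrow> 'v set set \<Rightarrow> color \<Rightarrow> color \<Rightarrow> 'v set \<Rightarrow> 'v set set" where
  "face_bdry col T c c' e =
     {f \<in> colored_edges col T (UNIV - {c, c'}). \<exists>t\<in>T. e \<subseteq> t \<and> f \<subseteq> t}"

inductive_set toric_Zstab :: "('v \<Rightarrow> color) \<Rightarrow> 'v set set \<Rightarrow> color \<Rightarrow> color \<Rightarrow> 'v set set set"
  for col T c c' where
  tz_id: "{} \<in> toric_Zstab col T c c'"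
| tz_mult: "A \<in> toric_Zstab col T c c' \<Longrightarrow> e \<in> colored_edges col T {c, c'} \<Longrightarrow>
            sdiff A (face_bdry col T c c' e) \<in> toric_Zstab col T c c'"

end

theory Submission
  imports Defs
begin

lemma color_UNIV: "(UNIV :: color set) = {Rc,Bc,Gc,Yc}"
  using color.exhaust by auto

lemma card_color: "card (UNIV :: color set) = 4"
  unfolding color_UNIV by simp

lemma finite_color[simp]: "finite (X :: color set)"
  by (rule finite_subset[of X "{Rc,Bc,Gc,Yc}"]) (metis color_UNIV subset_UNIV, simp)

lemma card_diff2: "c \<noteq> c' \<Longrightarrow> card (UNIV - {c, c'::color}) = 2"
  using card_color by (simp add: card_Diff_subset)

lemma tet_colors:
  assumes "colex_dual col T" "t \<in> T"
  shows "col ` t = UNIV"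
proof -
  have "finite t" "card t = 4" "inj_on col t" using assms unfolding colex_dual_def by auto
  hence "card (col ` t) = 4" by (simp add: card_image)
  thus ?thesis using card_color by (metis card_subset_eq finite_color subset_UNIV)
qed

lemma odd_sdiff:
  assumes "finite X" "finite Y"
  shows "odd (card (sdiff X Y)) \<longleftrightarrow> odd (card X) \<noteq> odd (card Y)"
proof -
  have 1: "card X = card (X - Y) + card (X \<inter> Y)"
    using assms by (metis Diff_Diff_Int card_Diff_subset_Int card_mono finite_Int inf_le1 le_add_diff_inverse2 Int_commute)
  have 2: "card Y = card (Y - X) + card (X \<inter> Y)"
    using assms by (metis Diff_Diff_Int card_Diff_subset_Int card_mono finite_Int inf_le1 le_add_diff_inverse2 Int_commute)
  have 3: "card (sdiff X Y) = card (X - Y) + card (Y - X)"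
    unfolding sdiff_def using assms by (subst card_Un_disjoint) auto
  show ?thesis using 1 2 3 by presburger
qed

lemma eb_sdiff:
  assumes "finite A" "finite B"
  shows "edge_boundary (sdiff A B) = sdiff (edge_boundary A) (edge_boundary B)"
proof -
  have "\<And>e. {t \<in> sdiff A B. e \<subseteq> t} = sdiff {t\<in>A. e \<subseteq> t} {t\<in>B. e \<subseteq> t}"
    unfolding sdiff_def by blast
  hence "\<And>e. odd (card {t \<in> sdiff A B. e \<subseteq> t}) \<longleftrightarrow>
     odd (card {t\<in>A. e \<subseteq> t}) \<noteq> odd (card {t\<in>B. e \<subseteq> t})"
    using odd_sdiff[of "{t\<in>A. e \<subseteq> t}" "{t\<in>B. e \<subseteq> t}" for e] assms by simp
  thus ?thesis unfolding edge_boundary_def sdiff_def by auto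
qed

lemma color_Zstab_sub: "A \<in> color_Zstab T \<Longrightarrow> A \<subseteq> T"
  by (induction rule: color_Zstab.induct) (auto simp: sdiff_def BZ_def)

lemma key:
  assumes cd: "colex_dual col T" and cc: "c \<noteq> c'"
    and e: "e \<in> colored_edges col T {c, c'}"
  shows "edge_boundary (BZ T e) = face_bdry col T c c' e"
proof -
  have finT: "finite T" and tets: "\<And>t. t \<in> T \<Longrightarrow> finite t \<and> card t = 4 \<and> inj_on col t"
    and tri: "\<And>t s. t \<in> T \<Longrightarrow> s \<subseteq> t \<Longrightarrow> card s = 3 \<Longrightarrow> card {t'\<in>T. s \<subseteq> t'} = 2"
    using cd unfolding colex_dual_def by auto
  have ce: "card e = 2" and ecol: "col ` e = {c,c'}" and "\<exists>t\<in>T. e \<subseteq> t"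
    using e unfolding colored_edges_def edges_def by auto
  then obtain t0 where t0: "t0 \<in> T" "e \<subseteq> t0" by blast
  have fe: "finite e" using ce card.infinite by fastforce
  show ?thesis
  proof (rule set_eqI)
    fix f
    have eq: "{t \<in> BZ T e. f \<subseteq> t} = {t\<in>T. e \<union> f \<subseteq> t}" unfolding BZ_def by blast
    show "f \<in> edge_boundary (BZ T e) \<longleftrightarrow> f \<in> face_bdry col T c c' e"
    proof (cases "card f = 2")
      case False
      thus ?thesis unfolding edge_boundary_def face_bdry_def colored_edges_def edges_def by auto
    next
      case cf: True
      have ff: "finite f" using cf card.infinite by fastforce
      show ?thesis
      proof (cases "e \<inter> f = {}")
        case disj: True
        have c4: "card (e \<union> f) = 4" using disj ce cf fe ff by (simp add: card_Un_disjoint)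
        have sub: "{t\<in>T. e \<union> f \<subseteq> t} \<subseteq> {e \<union> f}"
        proof
          fix t assume "t \<in> {t\<in>T. e \<union> f \<subseteq> t}"
          hence "t \<in> T" "e \<union> f \<subseteq> t" by auto
          hence "e \<union> f = t" using tets[of t] c4 by (metis card_subset_eq)
          thus "t \<in> {e \<union> f}" by simp
        qed
        show ?thesis
        proof
          assume "f \<in> edge_boundary (BZ T e)"
          hence "odd (card {t\<in>T. e \<union> f \<subseteq> t})" unfolding edge_boundary_def by (simp add: eq)
          hence "{t\<in>T. e \<union> f \<subseteq> t} \<noteq> {}" by (metis card.empty even_zero)
          hence uT: "e \<union> f \<in> T" using sub by blast
          have "col ` (e \<union> f) = UNIV" using tet_colors[OF cd uT] .
          moreover have "col ` e \<inter> col ` f = {}"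
            using tets[OF uT] disj by (auto simp: inj_on_def)
          ultimately have "col ` f = UNIV - {c,c'}" using ecol by (auto simp: image_Un)
          thus "f \<in> face_bdry col T c c' e" using uT cf
            unfolding face_bdry_def colored_edges_def edges_def by auto
        next
          assume "f \<in> face_bdry col T c c' e"
          then obtain t where t: "t \<in> T" "e \<subseteq> t" "f \<subseteq> t" unfolding face_bdry_def by blast
          hence "e \<union> f = t" using tets[OF t(1)] c4 by (metis Un_least card_subset_eq)
          hence "{t\<in>T. e \<union> f \<subseteq> t} = {e \<union> f}" using sub t by blast
          thus "f \<in> edge_boundary (BZ T e)" unfolding edge_boundary_def using cf by (simp add: eq)
        qed
      next
        case nd: False
        have notR: "f \<notin> face_bdry col T c c' e"
        proof
          assume "f \<in> face_bdry col T c c' e"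
          hence "col ` f = UNIV - {c,c'}" unfolding face_bdry_def colored_edges_def by auto
          moreover obtain x where "x \<in> e" "x \<in> f" using nd by blast
          ultimately show False using ecol by auto
        qed
        have "even (card {t\<in>T. e \<union> f \<subseteq> t})"
        proof (cases "f = e")
          case False
          have "card (e \<union> f) = 3"
          proof -
            have "card (e \<union> f) + card (e \<inter> f) = 4" using card_Un_Int[OF fe ff] ce cf by simp
            moreover have "card (e \<inter> f) \<noteq> 0" using nd fe by simp
            moreover have "card (e \<inter> f) \<noteq> 2"
            proof
              assume "card (e \<inter> f) = 2"
              hence "e \<inter> f = e" "e \<inter> f = f" using ce cf fe ff
                by (metis Int_lower1 Int_lower2 card_subset_eq)+
              thus False using False by simp
            qed
            moreover have "card (e \<inter> f) \<le> 2" using ce fe by (metis card_mono Int_lower1)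
            ultimately show ?thesis by linarith
          qed
          thus ?thesis
          proof (cases "\<exists>t\<in>T. e \<union> f \<subseteq> t")
            case True
            then obtain t where "t \<in> T" "e \<union> f \<subseteq> t" by blast
            hence "card {t\<in>T. e \<union> f \<subseteq> t} = 2" using tri \<open>card (e \<union> f) = 3\<close> by blast
            thus ?thesis by simp
          next
            case False
            hence "{t\<in>T. e \<union> f \<subseteq> t} = {}" by blast
            hence "card {t\<in>T. e \<union> f \<subseteq> t} = 0" by (metis card.empty)
            thus ?thesis by simp
          qed
        next
          case True
          obtain d where d: "d \<notin> {c, c'}"
            using card_diff2[OF cc] by (metis Diff_iff all_not_in_conv card.empty zero_neq_numeral)
          define W where "W = {w. \<exists>t\<in>T. e \<subseteq> t \<and> w \<in> t \<and> col w = d}"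
          define F where "F = (\<lambda>w. {t\<in>T. e \<union> {w} \<subseteq> t})"
          have A: "{t\<in>T. e \<union> f \<subseteq> t} = (\<Union>w\<in>W. F w)"
          proof
            show "{t\<in>T. e \<union> f \<subseteq> t} \<subseteq> (\<Union>w\<in>W. F w)"
            proof
              fix t assume t: "t \<in> {t\<in>T. e \<union> f \<subseteq> t}"
              hence "d \<in> col ` t" using tet_colors[OF cd] by blast
              then obtain w where "w \<in> t" "col w = d" by blast
              thus "t \<in> (\<Union>w\<in>W. F w)" using t True unfolding W_def F_def by blast
            qed
          next
            show "(\<Union>w\<in>W. F w) \<subseteq> {t\<in>T. e \<union> f \<subseteq> t}" unfolding F_def using True by blast
          qed
          have fW: "finite W"
          proof -
            have "W \<subseteq> \<Union>T" unfolding W_def by blast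
            moreover have "finite (\<Union>T)" using finT tets by blast
            ultimately show ?thesis using finite_subset by blast
          qed
          have c2: "\<And>w. w \<in> W \<Longrightarrow> card (F w) = 2"
          proof -
            fix w assume "w \<in> W"
            then obtain t where t: "t \<in> T" "e \<subseteq> t" "w \<in> t" "col w = d" unfolding W_def by blast
            have "w \<notin> e" using t(4) d ecol by auto
            hence "card (e \<union> {w}) = 3" using ce fe by simp
            moreover have "e \<union> {w} \<subseteq> t" using t by simp
            ultimately show "card (F w) = 2" unfolding F_def using tri[OF t(1)] by blast
          qed
          have "card (\<Union>w\<in>W. F w) = (\<Sum>w\<in>W. card (F w))"
          proof (rule card_UN_disjoint[OF fW])
            show "\<forall>i\<in>W. finite (F i)" unfolding F_def using finT by simp
            show "\<forall>i\<in>W. \<forall>j\<in>W. i \<noteq> j \<longrightarrow> F i \<inter> F j = {}"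
            proof (intro ballI impI)
              fix i j assume "i \<in> W" "j \<in> W" "i \<noteq> j"
              then obtain ti tj where "col i = d" "col j = d" unfolding W_def by blast
              show "F i \<inter> F j = {}"
              proof (rule ccontr)
                assume "F i \<inter> F j \<noteq> {}"
                then obtain t where "t \<in> T" "i \<in> t" "j \<in> t" unfolding F_def by blast
                thus False using tets \<open>col i = d\<close> \<open>col j = d\<close> \<open>i \<noteq> j\<close>
                  by (metis inj_on_contraD)
              qed
            qed
          qed
          also have "\<dots> = 2 * card W" using c2 by simp
          finally show ?thesis using A by simp
        qed
        thus ?thesis using notR unfolding edge_boundary_def by (simp add: eq)
      qed
    qed
  qed
qed

theorem lemma12:
  fixes col :: "'v \<Rightarrow> color" and T :: "'v set set" and \<Omega> :: "'v set set"
    and S :: "'v set set" and c c' :: color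
  assumes "colex_dual col T"
    and "c \<noteq> c'"
    and "\<Omega> \<subseteq> T"
    and "S \<in> toric_Zstab col T c c'"
  shows "\<exists>Sb \<in> color_Zstab T. sdiff (edge_boundary \<Omega>) S = edge_boundary (sdiff \<Omega> Sb)"
  using assms(4)
proof (induction rule: toric_Zstab.induct)
  case tz_id
  show ?case by (rule bexI[of _ "{}"]) (auto simp: sdiff_def intro: color_Zstab.cz_id)
next
  case (tz_mult A e)
  then obtain Sb where Sb: "Sb \<in> color_Zstab T" "sdiff (edge_boundary \<Omega>) A = edge_boundary (sdiff \<Omega> Sb)"
    by blast
  have finT: "finite T" using assms(1) unfolding colex_dual_def by simp
  have eE: "e \<in> edges T" using tz_mult(2) unfolding colored_edges_def by simp
  have f1: "finite (sdiff \<Omega> Sb)" using color_Zstab_sub[OF Sb(1)] assms(3) finT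
    unfolding sdiff_def by (meson finite_Diff finite_Un finite_subset)
  have f2: "finite (BZ T e)" using finT unfolding BZ_def by simp
  have "edge_boundary (sdiff \<Omega> (sdiff Sb (BZ T e))) = edge_boundary (sdiff (sdiff \<Omega> Sb) (BZ T e))"
    unfolding sdiff_def by (rule arg_cong[where f=edge_boundary]) blast
  also have "\<dots> = sdiff (edge_boundary (sdiff \<Omega> Sb)) (edge_boundary (BZ T e))"
    using eb_sdiff[OF f1 f2] .
  also have "\<dots> = sdiff (sdiff (edge_boundary \<Omega>) A) (face_bdry col T c c' e)"
    using Sb(2) key[OF assms(1,2) tz_mult(2)] by simp
  also have "\<dots> = sdiff (edge_boundary \<Omega>) (sdiff A (face_bdry col T c c' e))"
    unfolding sdiff_def by blast
  finally show ?case using Sb(1) eE color_Zstab.cz_mult by metis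
qed

end
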